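(* Let $V=V_1\oplus\cdots\oplus V_b$ with each $V_i\cong\mathbb{F}_2^s$. Let $\circ$ and $\diamond$ be two parallel alternative operations on $V$, defined componentwise by alternative operations $\circ_1,\dots,\circ_b$ and $\diamond_1,\dots,\diamond_b$ on $V_1,\dots,V_b$ respectively, such that $\dim W_{\circ_i}=\dim W_{\diamond_i}=s-2$ for all $i$. Then there exists $g\in\mathrm{GL}(V)$ such that $T_\diamond=T_\circ^g$.
   Context: Vectors are row vectors and maps are written in postfix notation. For a vector space $X$ over $\mathbb{F}_2$, an alternative operation on $X$ is defined from an elementary abelian $2$-subgroup $T<\mathrm{AGL}(X,+)$ acting regularly on $X$: writing $\tau_a$ for the unique element of $T$ with $0\tau_a=a$, set $a\circ b:=a\tau_b$; the translation group of $\circ$ is $T_\circ=T$. It is assumed that the xor-translations $x\mapsto x+a$ are affine with respect to $\circ$, i.e. lie in the normaliser of $T_\circ$ in $\mathrm{Sym}(X)$. The weak key space is $W_\circ=\{k: x\circ k=x+k\ \forall x\}$. An alternative operation $\circ$ on $V=V_1\oplus\cdots\oplus V_b$ is parallel, defined by alternative operations $\circ_j$ on $V_j$, if $(x_1,\dots,x_b)\circ(y_1,\dots,y_b)=(x_1\circ_1y_1,\dots,x_b\circ_by_b)$ for all $x_j,y_j\in V_j$. For a subgroup $T$ and $g\in\mathrm{GL}(V)$, $T^g:=gTg^{-1}$. *)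

theory Defs
  imports "HOL-Analysis.Analysis" "HOL-Library.Z2"
begin

text \<open>Vectors over F_2: the type bit ^ 'n (row vectors; maps written as functions,
  so the postfix product "x g h" is (h o g) x).\<close>

type_synonym 'n f2vec = "bit ^ 'n"

text \<open>General linear group GL(X): bijective F_2-linear maps.\<close>
definition GLmaps :: "('n::finite f2vec \<Rightarrow> 'n f2vec) set" where
  "GLmaps = {g. bij g \<and> Vector_Spaces.linear (*s) (*s) g}"

text \<open>Affine general linear group AGL(X,+): x \<mapsto> x L + c with L in GL(X).\<close>
definition AGLmaps :: "('n::finite f2vec \<Rightarrow> 'n f2vec) set" where
  "AGLmaps = {f. \<exists>L c. L \<in> GLmaps \<and> f = (\<lambda>x. L x + c)}"

text \<open>T is an elementary abelian 2-subgroup of AGL(X,+) acting regularly on X,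
  such that all xor-translations x \<mapsto> x + a lie in the normaliser of T in Sym(X).\<close>
definition alt_tgroup :: "('n::finite f2vec \<Rightarrow> 'n f2vec) set \<Rightarrow> bool" where
  "alt_tgroup T \<longleftrightarrow>
     T \<subseteq> AGLmaps \<and> id \<in> T \<and>
     (\<forall>t\<in>T. \<forall>u\<in>T. t \<circ> u \<in> T) \<and>
     (\<forall>t\<in>T. inv t \<in> T) \<and>
     (\<forall>t\<in>T. \<forall>u\<in>T. t \<circ> u = u \<circ> t) \<and>
     (\<forall>t\<in>T. t \<circ> t = id) \<and>
     (\<forall>a. \<exists>!t. t \<in> T \<and> t 0 = a) \<and>
     (\<forall>a. (\<lambda>t. (\<lambda>x. x + a) \<circ> t \<circ> inv (\<lambda>x. x + a)) ` T = T)"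

text \<open>The operation defined by T: a \<circ> b = a \<tau>_b, \<tau>_b the unique element of T with 0 \<tau>_b = b.\<close>
definition op_of :: "('n::finite f2vec \<Rightarrow> 'n f2vec) set \<Rightarrow> 'n f2vec \<Rightarrow> 'n f2vec \<Rightarrow> 'n f2vec" where
  "op_of T a b = (THE t. t \<in> T \<and> t 0 = b) a"

definition is_alt_op :: "('n::finite f2vec \<Rightarrow> 'n f2vec \<Rightarrow> 'n f2vec) \<Rightarrow> bool" where
  "is_alt_op circ \<longleftrightarrow> (\<exists>T. alt_tgroup T \<and> circ = op_of T)"

text \<open>Translation group T_\<circ> = {\<tau>_b : b \<in> X}, where x \<tau>_b = x \<circ> b.\<close>
definition transl :: "('n::finite f2vec \<Rightarrow> 'n f2vec \<Rightarrow> 'n f2vec) \<Rightarrow> ('n f2vec \<Rightarrow> 'n f2vec) set" where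
  "transl circ = {(\<lambda>x. circ x b) | b. True}"

text \<open>Weak key space W_\<circ>.\<close>
definition weak_keys :: "('n::finite f2vec \<Rightarrow> 'n f2vec \<Rightarrow> 'n f2vec) \<Rightarrow> 'n f2vec set" where
  "weak_keys circ = {k. \<forall>x. circ x k = x + k}"

text \<open>V = V_1 \<oplus> ... \<oplus> V_b with V_j = F_2^s realised as bit ^ ('b \<times> 's);
  the j-th block of x is (x(j,k))_k.\<close>
definition blk :: "('b::finite \<times> 's::finite) f2vec \<Rightarrow> 'b \<Rightarrow> 's f2vec" where
  "blk x j = (\<chi> k. x $ (j, k))"

definition par_op :: "('b::finite \<Rightarrow> ('s::finite f2vec \<Rightarrow> 's f2vec \<Rightarrow> 's f2vec))
     \<Rightarrow> ('b \<times> 's) f2vec \<Rightarrow> ('b \<times> 's) f2vec \<Rightarrow> ('b \<times> 's) f2vec" where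
  "par_op ops x y = (\<chi> p. (ops (fst p) (blk x (fst p)) (blk y (fst p))) $ snd p)"

text \<open>T^g = g T g^{-1} in postfix notation, i.e. x \<mapsto> ((x g) t) g^{-1}.\<close>
definition conjgrp :: "('n \<Rightarrow> 'n) \<Rightarrow> ('n \<Rightarrow> 'n) set \<Rightarrow> ('n \<Rightarrow> 'n) set" where
  "conjgrp g T = (\<lambda>t. inv g \<circ> t \<circ> g) ` T"

end

theory Submission
  imports Defs
begin

lemma bit_add_self[simp]: "(b::bit) + b = 0"
  by (cases b) auto

lemma f2_add_self[simp]: "(x::'n::finite f2vec) + x = 0"
  by (simp add: vec_eq_iff)

lemma f2_add_self2[simp]: "(x::'n::finite f2vec) + (x + y) = y"
  by (simp add: add.assoc[symmetric])

lemma f2_minus[simp]: "- (x::'n::finite f2vec) = x"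
  by (metis add_left_imp_eq f2_add_self left_minus)

lemma f2_diff[simp]: "(x::'n::finite f2vec) - y = x + y"
  by (simp add: diff_conv_add_uminus)

lemma additive_linear:
  fixes f :: "'n::finite f2vec \<Rightarrow> 'm::finite f2vec"
  assumes "\<And>x y. f (x + y) = f x + f y"
  shows "Vector_Spaces.linear (*s) (*s) f"
proof -
  have f0: "f 0 = 0" using assms[of 0 0] by simp
  have "f (c *s x) = c *s f x" for c :: bit and x by (cases c) (auto simp: f0)
  then show ?thesis unfolding Vector_Spaces.linear_iff
    by (intro conjI allI vec.vector_space_axioms assms) auto
qed



definition Dop :: "('n::finite f2vec \<Rightarrow> 'n f2vec \<Rightarrow> 'n f2vec) \<Rightarrow> 'n f2vec \<Rightarrow> 'n f2vec \<Rightarrow> 'n f2vec"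
  where "Dop op a x = op x a + x + a"

lemma op_Dop: "op x a = x + a + Dop op a x"
  unfolding Dop_def by (simp add: add_ac)

lemma weak_keys_Dop: "weak_keys op = {k. \<forall>x. Dop op k x = 0}"
proof -
  have "op x k = x + k \<longleftrightarrow> Dop op k x = 0" for x k
    using op_Dop[of op x k] by (metis add_cancel_right_right f2_add_self2 add.assoc)
  then show ?thesis unfolding weak_keys_def by blast
qed


definition goodD :: "('n::finite f2vec \<Rightarrow> 'n f2vec \<Rightarrow> 'n f2vec) \<Rightarrow> bool" where
  "goodD D \<longleftrightarrow> (\<forall>a. Vector_Spaces.linear (*s) (*s) (D a)) \<and> (\<forall>a b x. D (a+b) x = D a x + D b x)
     \<and> (\<forall>a b. D a b = D b a) \<and> (\<forall>a. D a a = 0) \<and> (\<forall>a b x. D (D a b) x = 0)"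

lemma alt_goodD:
  assumes "is_alt_op op"
  shows "goodD (Dop op)"
proof -
  obtain T where T: "alt_tgroup T" and opT: "op = op_of T" using assms is_alt_op_def by blast
  note TT = T[unfolded alt_tgroup_def]
  have Tsub: "T \<subseteq> AGLmaps" using TT by (elim conjE) assumption
  have Tcomp: "\<forall>t\<in>T. \<forall>u\<in>T. t \<circ> u \<in> T" using TT by (elim conjE) assumption
  have Tcomm: "\<forall>t\<in>T. \<forall>u\<in>T. t \<circ> u = u \<circ> t" using TT by (elim conjE) assumption
  have Tinvol: "\<forall>t\<in>T. t \<circ> t = id" using TT by (elim conjE) assumption
  have ex1: "\<forall>a. \<exists>!t. t \<in> T \<and> t 0 = a" using TT by (elim conjE) assumption
  have Tnorm: "\<forall>a. (\<lambda>t. (\<lambda>x. x + a) \<circ> t \<circ> inv (\<lambda>x. x + a)) ` T = T" using TT by (elim conjE) assumption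
  define tau where "tau a = (THE t. t \<in> T \<and> t 0 = a)" for a
  have tauT: "tau a \<in> T" and tau0: "tau a 0 = a" for a
    using theI'[OF spec[OF ex1, of a]] unfolding tau_def by auto
  have tauU: "t \<in> T \<Longrightarrow> t 0 = a \<Longrightarrow> t = tau a" for t a
    unfolding tau_def by (rule the1_equality[symmetric, OF spec[OF ex1]]) simp
  define D where "D = Dop op"
  have opD: "op x a = tau a x" for x a unfolding opT op_of_def tau_def by (rule refl)
  have tauD: "tau a x = x + a + D a x" for a x unfolding D_def opD[symmetric] by (rule op_Dop)
  have Dlin: "Vector_Spaces.linear (*s) (*s) (D a)" for a
  proof -
    have "tau a \<in> AGLmaps" using Tsub tauT by blast
    then obtain L c where L: "L \<in> GLmaps" and tl: "tau a = (\<lambda>x. L x + c)" unfolding AGLmaps_def by blast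
    have Ll: "Vector_Spaces.linear (*s) (*s) L" using L GLmaps_def by blast
    have "c = a" using tau0[of a] tl vec.linear_0[OF Ll] by simp
    then have "D a x = L x + x" for x using tauD[of a x] tl
      by (simp add: D_def Dop_def opD add_ac)
    then show ?thesis using Ll vec.linear_add[OF Ll] by (auto intro!: additive_linear simp: add_ac)
  qed
  have F2: "tau a (tau b x) = tau (tau a b) x" for a b x
  proof -
    have "tau a \<circ> tau b \<in> T" using Tcomp tauT by blast
    then have "tau a \<circ> tau b = tau (tau a b)" using tauU[of "tau a \<circ> tau b" "tau a b"] tau0 by simp
    then show ?thesis by (metis comp_apply)
  qed
  have F3: "tau a b = tau b a" for a b
  proof -
    have "tau a \<circ> tau b = tau b \<circ> tau a" using Tcomm tauT by blast
    then show ?thesis by (metis comp_apply tau0)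
  qed
  have F4: "tau a (tau a x) = x" for a x
  proof -
    have "tau a \<circ> tau a = id" using Tinvol tauT by blast
    then show ?thesis by (metis comp_apply id_apply)
  qed
  have F5: "tau (tau a c + c) x = tau a (x + c) + c" for a c x
  proof -
    have inv: "inv (\<lambda>x. x + c) = (\<lambda>x. x + c)"
      by (rule inv_equality) (simp_all add: add.assoc)
    have "(\<lambda>x. x + c) \<circ> tau a \<circ> inv (\<lambda>x. x + c) \<in> (\<lambda>t. (\<lambda>x. x + c) \<circ> t \<circ> inv (\<lambda>x. x + c)) ` T"
      using tauT[of a] by (rule imageI)
    then have "(\<lambda>x. x + c) \<circ> tau a \<circ> inv (\<lambda>x. x + c) \<in> T"
      using Tnorm by simp
    then have "(\<lambda>x. x + c) \<circ> tau a \<circ> (\<lambda>x. x + c) \<in> T" by (simp only: inv)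
    then have "(\<lambda>x. x + c) \<circ> tau a \<circ> (\<lambda>x. x + c) = tau (tau a c + c)"
      using tauU[of "(\<lambda>x. x + c) \<circ> tau a \<circ> (\<lambda>x. x + c)" "tau a c + c"] by simp
    then show ?thesis by (metis comp_apply)
  qed
  have D0: "D a 0 = 0" for a using Dlin vec.linear_0 by blast
  have Dadd: "D a (x + y) = D a x + D a y" for a x y using Dlin vec.linear_add by blast
  have i: "D a a = 0" for a using F4[of a 0] tau0 by (simp add: tauD D0)
  have ii: "D a (D a x) = 0" for a x
    using F4[of a x] by (simp add: tauD Dadd i add_ac)
  have iii: "D (a + D a c) x = D a x" for a c x
    using F5[of a c x] by (simp add: tauD Dadd add_ac)
  have iv: "D (a + b + D a b) x = D b x + D a x + D a (D b x)" for a b x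
    using F2[of a b x] by (simp add: tauD Dadd add_ac)
  have v: "D a b = D b a" for a b
    using F3[of a b] by (simp add: tauD add_ac)
  have vi: "D (D a c) x = 0" for a c x
  proof -
    define b where "b = D a c"
    have "D (a + b) x = D b x + D a x + D a (D b x)"
      using iv[of a b x] by (simp add: b_def ii)
    moreover have "D (a + b) x = D a x" using iii b_def by simp
    ultimately have "D b x = D a (D b x)"
      by (metis add.commute f2_add_self2 add.assoc)
    then have "D b x = D a (D a (D b x))" by simp
    then show ?thesis using ii b_def by simp
  qed
  have vii: "D a w = 0" if "\<forall>x. D w x = 0" for a w using v that by metis
  have viii: "D (w + y) x = D y x" if "\<forall>x. D w x = 0" for w y x
    using iv[of w y x] that v[of w y] by simp
  have ix: "D (a + b) x = D a x + D b x" for a b x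
  proof -
    have "D (D a b + (a + b)) x = D (a + b) x"
      using viii[of "D a b" "a + b" x] vi by blast
    then have "D (a + b + D a b) x = D (a + b) x" by (simp add: add_ac)
    moreover have "D a (D b x) = 0" using vii[of "D b x" a] vi by blast
    ultimately show ?thesis using iv[of a b x] by (simp add: add_ac)
  qed
  show ?thesis unfolding goodD_def D_def[symmetric]
    using Dlin ix v i vi by blast
qed


lemma goodD_facts:
  assumes "goodD D"
  shows "Vector_Spaces.linear (*s) (*s) (D a)" "D (a+b) x = D a x + D b x" "D a b = D b a"
    "D a a = 0" "D (D a b) x = 0"
  using assms unfolding goodD_def by blast+

lemma dimension_vec: "finite_dimensional_vector_space.dimension (cart_basis :: ('a::field ^ 'n::finite) set) = CARD('n)"
  unfolding vec.dimension_def by (rule card_cart_basis)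

lemma frame:
  fixes D :: "'s::finite f2vec \<Rightarrow> 's f2vec \<Rightarrow> 's f2vec"
  assumes gD: "goodD D" and dW: "vec.dim {k. \<forall>x. D k x = 0} + 2 = CARD('s)"
  shows "\<exists>e1 e2 K. K \<subseteq> {k. \<forall>x. D k x = 0} \<and> D e1 e2 \<in> K \<and> e1 \<notin> {k. \<forall>x. D k x = 0}
     \<and> e2 \<notin> {k. \<forall>x. D k x = 0} \<and> e1 \<noteq> e2 \<and> finite K \<and> card K + 2 = CARD('s)
     \<and> vec.independent (insert e2 (insert e1 K)) \<and> vec.span (insert e2 (insert e1 K)) = UNIV"
proof -
  define W where "W = {k. \<forall>x. D k x = 0}"
  note F = goodD_facts[OF gD]
  have D0: "D 0 x = 0" for x using F(2)[of 0 0 x] by simp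
  have subW: "vec.subspace W"
    unfolding vec.subspace_def W_def
  proof (intro conjI ballI allI)
    fix c :: bit and x :: "'s f2vec" assume "x \<in> {k. \<forall>x. D k x = 0}"
    then show "c *s x \<in> {k. \<forall>x. D k x = 0}" by (cases c) (auto simp: D0)
  qed (auto simp: D0 F(2))
  have spW: "vec.span W = W" using subW by simp
  have dW': "vec.dim W + 2 = finite_dimensional_vector_space.dimension (cart_basis :: 's f2vec set)"
    using dW W_def dimension_vec[where 'a=bit and 'n='s] by simp
  obtain e1 where e1: "e1 \<notin> vec.span W"
  proof -
    have "vec.span W \<noteq> UNIV" using dW' vec.dim_eq_full[of W] by auto
    then show ?thesis using that by blast
  qed
  define S1 where "S1 = insert e1 W"
  have dS1: "vec.dim S1 = vec.dim W + 1" unfolding S1_def using e1 by (simp add: vec.dim_insert)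
  obtain e2 where e2: "e2 \<notin> vec.span S1"
  proof -
    have "vec.span S1 \<noteq> UNIV" using dW' dS1 vec.dim_eq_full[of S1] by auto
    then show ?thesis using that by blast
  qed
  define S2 where "S2 = insert e2 S1"
  have dS2: "vec.dim S2 = vec.dim W + 2" unfolding S2_def using e2 dS1 by (simp add: vec.dim_insert)
  have spS2: "vec.span S2 = UNIV" using dS2 dW' vec.dim_eq_full[of S2] by simp
  have e1W: "e1 \<notin> W" using e1 vec.span_superset by blast
  have e2W: "e2 \<notin> W" using e2 vec.span_superset S1_def by blast
  have e12: "e1 \<noteq> e2" using e2 vec.span_superset S1_def by blast
  define w0 where "w0 = D e1 e2"
  have w0W: "w0 \<in> W" unfolding W_def w0_def using F(5) by blast
  have w0nz: "w0 \<noteq> 0"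
  proof
    assume w0: "w0 = 0"
    have "D e1 y = (\<lambda>y. 0) y" for y
    proof (rule vec.linear_eq_on[OF F(1) vec.linear_zero])
      show "y \<in> vec.span S2" using spS2 by simp
    next
      fix b assume "b \<in> S2"
      then consider "b = e2" | "b = e1" | "b \<in> W" unfolding S2_def S1_def by blast
      then show "D e1 b = 0"
      proof cases
        case 1 then show ?thesis using w0 w0_def by simp
      next
        case 2 then show ?thesis using F(4) by simp
      next
        case 3 then show ?thesis using F(3)[of e1 b] W_def by simp
      qed
    qed
    then have "e1 \<in> W" unfolding W_def by simp
    then show False using e1W by blast
  qed
  have indw0: "vec.independent {w0}"
    using w0nz vec.independent_empty by (intro vec.independent_insertI) auto
  obtain K where K: "{w0} \<subseteq> K" "K \<subseteq> W" "vec.independent K" "W \<subseteq> vec.span K"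
    using vec.maximal_independent_subset_extend[of "{w0}" W] w0W indw0 by auto
  have spK: "vec.span K = W" using K spW vec.span_mono[of K W] vec.span_superset[of K] by blast
  have fK: "finite K" using K(3) vec.finiteI_independent by blast
  have cK: "card K = vec.dim W" using vec.basis_card_eq_dim[OF K(2) K(4) K(3)] .
  have ind: "vec.independent (insert e2 (insert e1 K))"
  proof (rule vec.independent_insertI)
    show "vec.independent (insert e1 K)" using K(3) e1W spK by (intro vec.independent_insertI) auto
    have "vec.span (insert e1 K) \<subseteq> vec.span S1" using K(2) S1_def by (intro vec.span_mono) auto
    then show "e2 \<notin> vec.span (insert e1 K)" using e2 by blast
  qed
  have "S2 \<subseteq> vec.span (insert e2 (insert e1 K))"
    unfolding S2_def S1_def using spK vec.span_superset[of "insert e2 (insert e1 K)"]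
      vec.span_mono[of K "insert e2 (insert e1 K)"] by auto
  then have "vec.span S2 \<subseteq> vec.span (insert e2 (insert e1 K))"
    by (metis vec.span_mono vec.span_span)
  then have sp: "vec.span (insert e2 (insert e1 K)) = UNIV" using spS2 by blast
  show ?thesis
    apply (rule exI[of _ e1], rule exI[of _ e2], rule exI[of _ K])
    using K(1,2) w0_def e1W e2W e12 fK cK dW ind sp W_def by auto
qed


lemma core_conj:
  fixes D E :: "'s::finite f2vec \<Rightarrow> 's f2vec \<Rightarrow> 's f2vec"
  assumes gD: "goodD D" and gE: "goodD E"
    and dD: "vec.dim {k. \<forall>x. D k x = 0} + 2 = CARD('s)"
    and dE: "vec.dim {k. \<forall>x. E k x = 0} + 2 = CARD('s)"
  shows "\<exists>g\<in>GLmaps. \<forall>a x. g (E a x) = D (g a) (g x)"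
proof -
  note FD = goodD_facts[OF gD]
  note FE = goodD_facts[OF gE]
  obtain e1 e2 K where K: "K \<subseteq> {k. \<forall>x. D k x = 0}" "D e1 e2 \<in> K" "e1 \<notin> {k. \<forall>x. D k x = 0}"
     "e2 \<notin> {k. \<forall>x. D k x = 0}" "e1 \<noteq> e2" "finite K" "card K + 2 = CARD('s)"
     "vec.independent (insert e2 (insert e1 K))" "vec.span (insert e2 (insert e1 K)) = UNIV"
    using frame[OF gD dD] by blast
  obtain f1 f2 K' where K': "K' \<subseteq> {k. \<forall>x. E k x = 0}" "E f1 f2 \<in> K'" "f1 \<notin> {k. \<forall>x. E k x = 0}"
     "f2 \<notin> {k. \<forall>x. E k x = 0}" "f1 \<noteq> f2" "finite K'" "card K' + 2 = CARD('s)"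
     "vec.independent (insert f2 (insert f1 K'))" "vec.span (insert f2 (insert f1 K')) = UNIV"
    using frame[OF gE dE] by blast
  define w0 where "w0 = D e1 e2"
  define v0 where "v0 = E f1 f2"
  have "card (K' - {v0}) = card (K - {w0})"
    using K(2,6,7) K'(2,6,7) w0_def v0_def by simp
  then obtain phi where phi: "bij_betw phi (K' - {v0}) (K - {w0})"
    using finite_same_card_bij[of "K' - {v0}" "K - {w0}"] K(6) K'(6) by auto
  define fm where "fm b = (if b = f1 then e1 else if b = f2 then e2 else if b = v0 then w0 else phi b)" for b
  define B' where "B' = insert f2 (insert f1 K')"
  obtain g where lin: "Vector_Spaces.linear (*s) (*s) g" and gB: "\<forall>b\<in>B'. g b = fm b"
    using vec.linear_independent_extend[OF K'(8)[folded B'_def], of fm] by blast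
  have v0f: "v0 \<noteq> f1" "v0 \<noteq> f2" using K'(2,3,4) K'(1) v0_def by auto
  have g1: "g f1 = e1" using gB B'_def fm_def by simp
  have g2: "g f2 = e2" using gB B'_def fm_def K'(5) by simp
  have gv0: "g v0 = w0" using gB B'_def fm_def v0f K'(2) v0_def by simp
  have gk: "g k = phi k" if "k \<in> K' - {v0}" for k
  proof -
    have "k \<noteq> f1" "k \<noteq> f2" using that K'(1,3,4) by auto
    then show ?thesis using gB B'_def fm_def that by simp
  qed
  have gK: "g k \<in> K" if "k \<in> K'" for k
  proof (cases "k = v0")
    case True then show ?thesis using gv0 K(2) w0_def by simp
  next
    case False then show ?thesis using gk[of k] that phi bij_betw_apply[OF phi, of k] by auto
  qed
  have img: "g ` B' = insert e2 (insert e1 K)"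
  proof
    show "g ` B' \<subseteq> insert e2 (insert e1 K)" unfolding B'_def using g1 g2 gK by auto
  next
    have "K - {w0} \<subseteq> g ` (K' - {v0})"
      using bij_betw_imp_surj_on[OF phi] gk by (auto simp: image_iff)
    moreover have "w0 \<in> g ` K'" using gv0 K'(2) v0_def by force
    ultimately have "K \<subseteq> g ` K'" by blast
    then show "insert e2 (insert e1 K) \<subseteq> g ` B'" unfolding B'_def using g1 g2 by auto
  qed
  have "surj g"
  proof -
    have "UNIV = vec.span (g ` B')" using img K(9) by simp
    also have "\<dots> = g ` vec.span B'" by (rule vec.linear_span_image[OF lin])
    finally show ?thesis by auto
  qed
  then have "bij g" using vec.linear_surj_imp_inj[OF lin] by (simp add: bij_def)
  then have gGL: "g \<in> GLmaps" using lin GLmaps_def by blast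
  have g0: "g 0 = 0" using vec.linear_0[OF lin] .
  have gadd: "g (x + y) = g x + g y" for x y using vec.linear_add[OF lin] .
  have spB': "vec.span B' = UNIV" using K'(9) B'_def by simp
  have DW: "D (g k) = (\<lambda>x. 0)" if "k \<in> K'" for k using gK[OF that] K(1) by auto
  have EW: "E k = (\<lambda>x. 0)" if "k \<in> K'" for k using that K'(1) by auto
  have base: "g (E a x) = D (g a) (g x)" if a: "a \<in> B'" and x: "x \<in> B'" for a x
  proof -
    consider "x \<in> K'" | "a \<in> K'" | "a = x" | "a = f1" "x = f2" | "a = f2" "x = f1"
      using a x B'_def by blast
    then show ?thesis
    proof cases
      case 1 then show ?thesis using FE(3)[of a x] FD(3)[of "g a" "g x"] EW DW g0 by simp
    next
      case 2 then show ?thesis using EW DW g0 by simp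
    next
      case 3 then show ?thesis using FE(4) FD(4) g0 by simp
    next
      case 4 then show ?thesis using g1 g2 gv0 v0_def w0_def by simp
    next
      case 5 then show ?thesis using g1 g2 gv0 v0_def w0_def FE(3)[of f1 f2] FD(3)[of e1 e2] by simp
    qed
  qed
  have half: "g (E a x) = D (g a) (g x)" if a: "a \<in> B'" for a x
  proof (rule vec.linear_eq_on[where f="\<lambda>x. g (E a x)" and g="\<lambda>x. D (g a) (g x)"])
    show "Vector_Spaces.linear (*s) (*s) (\<lambda>x. g (E a x))"
      using Vector_Spaces.linear_compose[OF FE(1)[of a] lin] by (simp add: o_def)
    show "Vector_Spaces.linear (*s) (*s) (\<lambda>x. D (g a) (g x))"
      using Vector_Spaces.linear_compose[OF lin FD(1)[of "g a"]] by (simp add: o_def)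
    show "x \<in> vec.span B'" using spB' by simp
  qed (rule base[OF a])
  have full: "g (E a x) = D (g a) (g x)" for a x
  proof (rule vec.linear_eq_on[where f="\<lambda>a. g (E a x)" and g="\<lambda>a. D (g a) (g x)"])
    show "Vector_Spaces.linear (*s) (*s) (\<lambda>a. g (E a x))"
      by (rule additive_linear) (simp add: FE(2) gadd)
    show "Vector_Spaces.linear (*s) (*s) (\<lambda>a. D (g a) (g x))"
      by (rule additive_linear) (simp add: FD(2) gadd)
    show "a \<in> vec.span B'" using spB' by simp
  qed (rule half)
  show ?thesis using gGL full by blast
qed

lemma conj_block:
  fixes c d :: "'s::finite f2vec \<Rightarrow> 's f2vec \<Rightarrow> 's f2vec"
  assumes "is_alt_op c" "is_alt_op d" "vec.dim (weak_keys c) + 2 = CARD('s)"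
    "vec.dim (weak_keys d) + 2 = CARD('s)"
  shows "\<exists>g \<in> GLmaps. \<forall>x a. g (d x a) = c (g x) (g a)"
proof -
  obtain g where g: "g \<in> GLmaps" and rel: "\<And>a x. g (Dop d a x) = Dop c (g a) (g x)"
    using core_conj[OF alt_goodD[OF assms(1)] alt_goodD[OF assms(2)]] assms(3,4)
    unfolding weak_keys_Dop by blast
  have lin: "Vector_Spaces.linear (*s) (*s) g" using g GLmaps_def by blast
  have "g (d x a) = c (g x) (g a)" for x a
    by (subst (1 2) op_Dop) (simp add: vec.linear_add[OF lin] rel)
  then show ?thesis using g by blast
qed


lemma blk_eq_iff: "x = y \<longleftrightarrow> (\<forall>j. blk x j = blk y j)"
  unfolding blk_def vec_eq_iff by auto

lemma blk_add: "blk (x + y) j = blk x j + blk y j"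
  unfolding blk_def by (simp add: vec_eq_iff)

lemma blk_lam: "blk (\<chi> p. f (fst p) $ snd p) j = f j"
  unfolding blk_def by (simp add: vec_eq_iff)

lemma blk_par: "blk (par_op ops x y) j = ops j (blk x j) (blk y j)"
  unfolding par_op_def by (rule blk_lam)

lemma par_conj:
  fixes g :: "'b::finite \<Rightarrow> 's::finite f2vec \<Rightarrow> 's f2vec"
  assumes g: "\<And>j. g j \<in> GLmaps" and rel: "\<And>j x a. g j (d j x a) = c j (g j x) (g j a)"
  shows "\<exists>G \<in> GLmaps. \<forall>x a. G (par_op d x a) = par_op c (G x) (G a)"
proof -
  define G where "G x = (\<chi> p. g (fst p) (blk x (fst p)) $ snd p)" for x :: "('b \<times> 's) f2vec"
  define H where "H x = (\<chi> p. inv (g (fst p)) (blk x (fst p)) $ snd p)" for x :: "('b \<times> 's) f2vec"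
  have bG: "blk (G x) j = g j (blk x j)" for x j unfolding G_def by (rule blk_lam)
  have bH: "blk (H x) j = inv (g j) (blk x j)" for x j unfolding H_def by (rule blk_lam)
  have bij: "bij (g j)" for j using g GLmaps_def by blast
  have lin: "Vector_Spaces.linear (*s) (*s) (g j)" for j using g GLmaps_def by blast
  have HG: "H (G x) = x" for x
    unfolding blk_eq_iff bH bG using bij by (simp add: bij_is_inj)
  have GH: "G (H x) = x" for x
    unfolding blk_eq_iff bH bG using bij by (simp add: bij_is_surj surj_f_inv_f)
  have "bij G" using HG GH by (metis bijI' )
  moreover have "Vector_Spaces.linear (*s) (*s) G"
  proof (rule additive_linear)
    fix x y show "G (x + y) = G x + G y"
      unfolding blk_eq_iff bG blk_add using vec.linear_add[OF lin] by simp
  qed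
  ultimately have "G \<in> GLmaps" unfolding GLmaps_def by blast
  moreover have "G (par_op d x a) = par_op c (G x) (G a)" for x a
    unfolding blk_eq_iff bG blk_par using rel by simp
  ultimately show ?thesis by blast
qed

theorem theorem4:
  fixes circ diam :: "'b::finite \<Rightarrow> ('s::finite f2vec \<Rightarrow> 's f2vec \<Rightarrow> 's f2vec)"
  assumes "\<forall>j. is_alt_op (circ j)"
    and "\<forall>j. is_alt_op (diam j)"
    and "\<forall>j. vec.dim (weak_keys (circ j)) + 2 = CARD('s)"
    and "\<forall>j. vec.dim (weak_keys (diam j)) + 2 = CARD('s)"
  shows "\<exists>g \<in> GLmaps. transl (par_op diam) = conjgrp g (transl (par_op circ))"
proof -
  have "\<forall>j. \<exists>g \<in> GLmaps. \<forall>x a. g (diam j x a) = circ j (g x) (g a)"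
    using conj_block assms by blast
  then obtain g where g: "\<And>j. g j \<in> GLmaps" and rel: "\<And>j x a. g j (diam j x a) = circ j (g j x) (g j a)"
    by metis
  obtain G where G: "G \<in> GLmaps" and relG: "\<And>x a. G (par_op diam x a) = par_op circ (G x) (G a)"
    using par_conj[of g diam circ, OF g rel] by blast
  have bG: "bij G" using G GLmaps_def by blast
  have invG: "inv G (G x) = x" for x using bG by (simp add: bij_is_inj)
  have Ginv: "G (inv G x) = x" for x using bG by (simp add: bij_is_surj surj_f_inv_f)
  have key: "(\<lambda>x. par_op diam x b) = inv G \<circ> (\<lambda>x. par_op circ x (G b)) \<circ> G" for b
    by (rule ext) (simp add: relG[symmetric] invG)
  have "transl (par_op diam) = conjgrp G (transl (par_op circ))"
  proof (rule set_eqI, rule iffI)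
    fix t assume "t \<in> transl (par_op diam)"
    then obtain b where "t = (\<lambda>x. par_op diam x b)" unfolding transl_def by blast
    then show "t \<in> conjgrp G (transl (par_op circ))"
      unfolding conjgrp_def transl_def key by blast
  next
    fix t assume "t \<in> conjgrp G (transl (par_op circ))"
    then obtain b where "t = inv G \<circ> (\<lambda>x. par_op circ x b) \<circ> G" unfolding conjgrp_def transl_def by blast
    then have "t = (\<lambda>x. par_op diam x (inv G b))" using key[of "inv G b"] by (simp add: Ginv)
    then show "t \<in> transl (par_op diam)" unfolding transl_def by blast
  qed
  then show ?thesis using G by blast
qed

end
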